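(* Fix constants $\gamma\in(0,1]$, $c_1>0$, $K\ge1$, $K'\ge1$. There exists $L_0$ depending only on these constants such that the following holds for every $L\ge L_0$. Let $d_0,\dots,d_L$ be positive integers, $X\in\mathbb{R}^{d_0\times n}$, $Y\in\mathbb{R}^{d_L\times n}$ with $K^{-1}\le\|X\|_F\le K$ and $K^{-1}\le\|Y\|_F\le K$, and let $\alpha>0$, $\sigma_1,\dots,\sigma_L>0$ satisfy $\beta:=\alpha\prod_{i=1}^L(\sqrt{d_i}\sigma_i)\le L^K$. Let $\ell(W_1,\dots,W_L)=\frac12\|\alpha W_L\cdots W_1X-Y\|_F^2$ for $W_i\in\mathbb{R}^{d_i\times d_{i-1}}$. Suppose matrices $W_1,\dots,W_L$ are such that $A_i=W_i/(\sqrt{d_i}\sigma_i)$ satisfy $\|A_{j:i}\|\le K'L^3$ for all $1\le i\le j\le L$ and $\|A_{j:i}\|\le K'e^{-c_1L^\gamma}$ for all $1\le i\le j\le L$ with $j-i\ge L/4$, where $A_{j:i}=A_j\cdots A_i$ and $A_{i-1:i}=I$. Then $$0.4\|Y\|_F^2<\ell(W_1,\dots,W_L)<0.6\|Y\|_F^2,\qquad \|\nabla_{W_i}\ell(W_1,\dots,W_L)\|\le(\sqrt{d_i}\sigma_i)^{-1}e^{-0.9c_1L^\gamma}\ \ \forall i\in[L].$$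
   Context: $\|\cdot\|$ is the spectral norm, $\|\cdot\|_F$ the Frobenius norm; $[L]=\{1,\dots,L\}$. *)

theory Defs
  imports Complex_Main "Jordan_Normal_Form.Matrix"
begin

definition vnorm :: "real vec \<Rightarrow> real" where
  "vnorm v = sqrt (\<Sum>k<dim_vec v. (v $ k)^2)"

definition frob_norm :: "real mat \<Rightarrow> real" where
  "frob_norm M = sqrt (\<Sum>a<dim_row M. \<Sum>b<dim_col M. (M $$ (a,b))^2)"

definition spec_norm :: "real mat \<Rightarrow> real" where
  "spec_norm M = Sup {vnorm (M *\<^sub>v v) | v. v \<in> carrier_vec (dim_col M) \<and> vnorm v \<le> 1}"

text \<open>seg_prod A n0 i k = A (i+k-1) * ... * A i (k factors); for k = 0 it is the
  identity of size n0.  So A_{j:i} = seg_prod A (d (i-1)) i (j+1-i).\<close>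
primrec seg_prod :: "(nat \<Rightarrow> real mat) \<Rightarrow> nat \<Rightarrow> nat \<Rightarrow> nat \<Rightarrow> real mat" where
  "seg_prod A n0 i 0 = 1\<^sub>m n0"
| "seg_prod A n0 i (Suc k) = A (i + k) * seg_prod A n0 i k"

definition mat_range :: "(nat \<Rightarrow> nat) \<Rightarrow> (nat \<Rightarrow> real mat) \<Rightarrow> nat \<Rightarrow> nat \<Rightarrow> real mat" where
  "mat_range d A j i = seg_prod A (d (i - 1)) i (Suc j - i)"

definition loss :: "nat \<Rightarrow> (nat \<Rightarrow> nat) \<Rightarrow> real \<Rightarrow> real mat \<Rightarrow> real mat \<Rightarrow> (nat \<Rightarrow> real mat) \<Rightarrow> real" where
  "loss L d \<alpha> X Y W = (1/2) * (frob_norm (\<alpha> \<cdot>\<^sub>m (mat_range d W L 1 * X) - Y))^2"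

text \<open>Gradient of the loss with respect to W_i: the d_i x d_{i-1} matrix of partial
  derivatives (SOME D. DERIV f 0 :> D, i.e. deriv f 0) with respect to the entries of W_i.\<close>
definition grad_loss :: "nat \<Rightarrow> (nat \<Rightarrow> nat) \<Rightarrow> real \<Rightarrow> real mat \<Rightarrow> real mat \<Rightarrow> (nat \<Rightarrow> real mat) \<Rightarrow> nat \<Rightarrow> real mat" where
  "grad_loss L d \<alpha> X Y W i = mat (d i) (d (i - 1)) (\<lambda>(a,b).
      SOME D. ((\<lambda>t. loss L d \<alpha> X Y (W(i := mat (d i) (d (i - 1))
                 (\<lambda>p. if p = (a,b) then W i $$ p + t else W i $$ p))))
               has_real_derivative D) (at 0))"

end

theory Submission
  imports Defs "HOL-Analysis.L2_Norm"
begin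


lemma vnorm_nonneg: "0 \<le> vnorm v"
  unfolding vnorm_def by (simp add: sum_nonneg)

lemma vnorm_sq: "(vnorm v)^2 = (\<Sum>k<dim_vec v. (v $ k)^2)"
  unfolding vnorm_def by (simp add: sum_nonneg)

lemma vnorm_L2: "vnorm v = L2_set (\<lambda>k. v $ k) {..<dim_vec v}"
  unfolding vnorm_def L2_set_def ..

lemma frob_nonneg: "0 \<le> frob_norm M"
  unfolding frob_norm_def by (simp add: sum_nonneg)

lemma frob_sq: "(frob_norm M)^2 = (\<Sum>a<dim_row M. \<Sum>b<dim_col M. (M $$ (a,b))^2)"
  unfolding frob_norm_def by (simp add: sum_nonneg)

lemma cs_vec:
  assumes "u \<in> carrier_vec n" "v \<in> carrier_vec n"
  shows "\<bar>u \<bullet> v\<bar> \<le> vnorm u * vnorm v"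
proof -
  have "\<bar>u \<bullet> v\<bar> = \<bar>\<Sum>i<n. u $ i * v $ i\<bar>" using assms unfolding scalar_prod_def
    by (simp add: atLeast0LessThan)
  also have "\<dots> \<le> (\<Sum>i<n. \<bar>u $ i\<bar> * \<bar>v $ i\<bar>)"
    by (metis (no_types, lifting) abs_mult sum.cong sum_abs)
  also have "\<dots> \<le> L2_set (\<lambda>i. u $ i) {..<n} * L2_set (\<lambda>i. v $ i) {..<n}"
    by (rule L2_set_mult_ineq)
  finally show ?thesis using assms by (simp add: vnorm_L2)
qed

lemma vnorm_mult_le:
  assumes v: "v \<in> carrier_vec (dim_col M)"
  shows "vnorm (M *\<^sub>v v) \<le> frob_norm M * vnorm v"
proof -
  have "(vnorm (M *\<^sub>v v))^2 = (\<Sum>a<dim_row M. (row M a \<bullet> v)^2)"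
    by (simp add: vnorm_sq)
  also have "\<dots> \<le> (\<Sum>a<dim_row M. (vnorm (row M a))^2 * (vnorm v)^2)"
  proof (rule sum_mono)
    fix a assume "a \<in> {..<dim_row M}"
    have "\<bar>row M a \<bullet> v\<bar> \<le> vnorm (row M a) * vnorm v"
      by (rule cs_vec[of _ "dim_col M"]) (use v in auto)
    hence "\<bar>row M a \<bullet> v\<bar>^2 \<le> (vnorm (row M a) * vnorm v)^2"
      by (rule power_mono) simp
    thus "(row M a \<bullet> v)^2 \<le> (vnorm (row M a))^2 * (vnorm v)^2"
      by (simp add: power_mult_distrib)
  qed
  also have "\<dots> = (frob_norm M)^2 * (vnorm v)^2"
    by (simp add: frob_sq vnorm_sq sum_distrib_right)
  also have "\<dots> = (frob_norm M * vnorm v)^2" by (simp add: power_mult_distrib)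
  finally show ?thesis
    by (meson frob_nonneg mult_nonneg_nonneg power2_le_imp_le vnorm_nonneg)
qed

lemma vnorm_smult: "vnorm (c \<cdot>\<^sub>v v) = \<bar>c\<bar> * vnorm v"
proof -
  have "(vnorm (c \<cdot>\<^sub>v v))^2 = (\<bar>c\<bar> * vnorm v)^2"
    by (simp add: vnorm_sq power_mult_distrib sum_distrib_left)
  thus ?thesis using vnorm_nonneg
    by (metis abs_ge_zero mult_nonneg_nonneg power2_eq_iff_nonneg)
qed

lemma vnorm_zero_imp: assumes "vnorm v = 0" "k < dim_vec v" shows "v $ k = 0"
proof -
  have "(\<Sum>k<dim_vec v. (v $ k)^2) = 0" using assms vnorm_sq[of v] by simp
  hence "\<forall>k\<in>{..<dim_vec v}. (v $ k)^2 = 0"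
    by (subst (asm) sum_nonneg_eq_0_iff) auto
  thus ?thesis using assms by auto
qed

definition spec_set :: "real mat \<Rightarrow> real set" where
  "spec_set M = {vnorm (M *\<^sub>v v) | v. v \<in> carrier_vec (dim_col M) \<and> vnorm v \<le> 1}"

lemma spec_set_bdd: "bdd_above (spec_set M)"
  unfolding spec_set_def
proof (rule bdd_aboveI[of _ "frob_norm M"], clarify)
  fix v :: "real vec" assume v: "v \<in> carrier_vec (dim_col M)" "vnorm v \<le> 1"
  have "vnorm (M *\<^sub>v v) \<le> frob_norm M * vnorm v" using vnorm_mult_le v by auto
  also have "\<dots> \<le> frob_norm M" using v frob_nonneg mult_left_le by blast
  finally show "vnorm (M *\<^sub>v v) \<le> frob_norm M" .
qed

lemma spec_set_ne: "0 \<in> spec_set M"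
proof -
  have "vnorm (0\<^sub>v (dim_col M)) = 0" by (simp add: vnorm_def)
  moreover have "M *\<^sub>v 0\<^sub>v (dim_col M) = 0\<^sub>v (dim_row M)"
    by (intro eq_vecI) (auto simp: scalar_prod_def)
  moreover have "vnorm (0\<^sub>v (dim_row M)) = 0" by (simp add: vnorm_def)
  ultimately show ?thesis unfolding spec_set_def
    by (smt (verit, ccfv_threshold) mem_Collect_eq zero_carrier_vec)
qed

lemma spec_eq: "spec_norm M = Sup (spec_set M)"
  unfolding spec_norm_def spec_set_def ..

lemma spec_nonneg: "0 \<le> spec_norm M"
  unfolding spec_eq by (rule cSup_upper2[OF spec_set_ne]) (auto intro: spec_set_bdd)

lemma spec_le_frob: "spec_norm M \<le> frob_norm M"
  unfolding spec_eq
proof (rule cSup_least)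
  show "spec_set M \<noteq> {}" using spec_set_ne by auto
  fix x assume "x \<in> spec_set M"
  then obtain v where v: "v \<in> carrier_vec (dim_col M)" "vnorm v \<le> 1" "x = vnorm (M *\<^sub>v v)"
    unfolding spec_set_def by auto
  have "vnorm (M *\<^sub>v v) \<le> frob_norm M * vnorm v" using vnorm_mult_le v by auto
  also have "\<dots> \<le> frob_norm M" using v frob_nonneg mult_left_le by blast
  finally show "x \<le> frob_norm M" using v by simp
qed

lemma spec_least:
  assumes "\<And>v. v \<in> carrier_vec (dim_col M) \<Longrightarrow> vnorm v \<le> 1 \<Longrightarrow> vnorm (M *\<^sub>v v) \<le> c"
  shows "spec_norm M \<le> c"
  unfolding spec_eq
  by (rule cSup_least) (use spec_set_ne assms in \<open>auto simp: spec_set_def\<close>)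

lemma vnorm_mult_spec:
  assumes v: "v \<in> carrier_vec (dim_col M)"
  shows "vnorm (M *\<^sub>v v) \<le> spec_norm M * vnorm v"
proof (cases "vnorm v = 0")
  case True
  have "v = 0\<^sub>v (dim_col M)" using vnorm_zero_imp[OF True] v by (intro eq_vecI) auto
  moreover have "M *\<^sub>v 0\<^sub>v (dim_col M) = 0\<^sub>v (dim_row M)"
    by (intro eq_vecI) (auto simp: scalar_prod_def)
  ultimately show ?thesis by (simp add: vnorm_def)
next
  case False
  hence pos: "vnorm v > 0" using vnorm_nonneg order_le_less by metis
  define u where "u = (1 / vnorm v) \<cdot>\<^sub>v v"
  have u: "u \<in> carrier_vec (dim_col M)" "vnorm u \<le> 1"
    using v pos by (auto simp: u_def vnorm_smult)
  have "vnorm (M *\<^sub>v u) \<in> spec_set M" using u unfolding spec_set_def by auto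
  hence le: "vnorm (M *\<^sub>v u) \<le> spec_norm M" unfolding spec_eq
    using spec_set_bdd by (rule cSup_upper)
  have "M *\<^sub>v u = (1 / vnorm v) \<cdot>\<^sub>v (M *\<^sub>v v)" unfolding u_def
    by (rule mult_mat_vec[of M "dim_row M" "dim_col M"]) (use v in auto)
  hence "vnorm (M *\<^sub>v u) = vnorm (M *\<^sub>v v) / vnorm v" using pos by (simp add: vnorm_smult)
  thus ?thesis using le pos by (simp add: divide_le_eq mult.commute)
qed


lemma vnorm_sq_scalar: "(vnorm u)^2 = u \<bullet> u"
  unfolding scalar_prod_def using vnorm_sq[of u] by (simp add: atLeast0LessThan power2_eq_square)

lemma spec_mult:
  assumes A: "A \<in> carrier_mat n1 n2" and B: "B \<in> carrier_mat n2 n3"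
  shows "spec_norm (A * B) \<le> spec_norm A * spec_norm B"
proof (rule spec_least)
  fix v assume v: "v \<in> carrier_vec (dim_col (A * B))" "vnorm v \<le> 1"
  hence v3: "v \<in> carrier_vec n3" using B by simp
  have "(A * B) *\<^sub>v v = A *\<^sub>v (B *\<^sub>v v)" using A B v3 by (rule assoc_mult_mat_vec)
  also have "vnorm \<dots> \<le> spec_norm A * vnorm (B *\<^sub>v v)"
    by (rule vnorm_mult_spec) (use A B v3 in auto)
  also have "\<dots> \<le> spec_norm A * (spec_norm B * vnorm v)"
    by (rule mult_left_mono[OF vnorm_mult_spec spec_nonneg]) (use B v3 in auto)
  also have "\<dots> \<le> spec_norm A * spec_norm B"
    by (rule mult_left_mono[OF mult_left_le[OF v(2) spec_nonneg] spec_nonneg])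
  finally show "vnorm ((A * B) *\<^sub>v v) \<le> spec_norm A * spec_norm B" .
qed

lemma spec_transpose:
  assumes N: "N \<in> carrier_mat nr nc"
  shows "spec_norm (transpose_mat N) \<le> spec_norm N"
proof (rule spec_least)
  fix w assume w: "w \<in> carrier_vec (dim_col (transpose_mat N))" "vnorm w \<le> 1"
  hence wr: "w \<in> carrier_vec nr" using N by simp
  define u where "u = transpose_mat N *\<^sub>v w"
  have u: "u \<in> carrier_vec nc" using N wr unfolding u_def by simp
  have Nu: "N *\<^sub>v u \<in> carrier_vec nr" using N u by simp
  have dN: "dim_col N = nc" using N by simp
  have "(vnorm u)^2 = u \<bullet> u" by (rule vnorm_sq_scalar)
  also have "\<dots> = w \<bullet> (N *\<^sub>v u)" unfolding u_def
    by (rule transpose_vec_mult_scalar[OF N _ wr]) (simp add: u[unfolded u_def])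
  also have "\<dots> \<le> \<bar>w \<bullet> (N *\<^sub>v u)\<bar>" by (rule abs_ge_self)
  also have "\<dots> \<le> vnorm w * vnorm (N *\<^sub>v u)"
    by (rule cs_vec[OF wr Nu])
  also have "\<dots> \<le> 1 * (spec_norm N * vnorm u)"
  proof (rule mult_mono[OF w(2)])
    show "vnorm (N *\<^sub>v u) \<le> spec_norm N * vnorm u"
      by (rule vnorm_mult_spec) (use u dN in \<open>simp only:\<close>)
  qed (auto intro: vnorm_nonneg)
  finally have le: "vnorm u * vnorm u \<le> spec_norm N * vnorm u" by (simp add: power2_eq_square)
  have "vnorm u \<le> spec_norm N"
  proof (cases "vnorm u = 0")
    case True thus ?thesis using spec_nonneg[of N] by simp
  next
    case False
    hence "vnorm u > 0" using vnorm_nonneg[of u] by linarith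
    thus ?thesis using le by (simp add: mult_le_cancel_right)
  qed
  thus "vnorm (transpose_mat N *\<^sub>v w) \<le> spec_norm N" by (simp add: u_def)
qed

lemma spec_one: "spec_norm (1\<^sub>m n) \<le> 1"
  by (rule spec_least) simp

lemma spec_smult: "spec_norm (c \<cdot>\<^sub>m M) \<le> \<bar>c\<bar> * spec_norm M"
proof (rule spec_least)
  fix v assume v: "v \<in> carrier_vec (dim_col (c \<cdot>\<^sub>m M))" "vnorm v \<le> 1"
  have "(c \<cdot>\<^sub>m M) *\<^sub>v v = c \<cdot>\<^sub>v (M *\<^sub>v v)"
    by (intro eq_vecI) (use v in \<open>auto simp: scalar_prod_def sum_distrib_left ac_simps intro!: sum.cong\<close>)
  hence "vnorm ((c \<cdot>\<^sub>m M) *\<^sub>v v) = \<bar>c\<bar> * vnorm (M *\<^sub>v v)" by (simp add: vnorm_smult)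
  also have "\<dots> \<le> \<bar>c\<bar> * (spec_norm M * vnorm v)"
    by (rule mult_left_mono[OF vnorm_mult_spec]) (use v in auto)
  also have "\<dots> \<le> \<bar>c\<bar> * spec_norm M"
    using v(2) spec_nonneg[of M] by (simp add: mult_left_le mult_left_mono)
  finally show "vnorm ((c \<cdot>\<^sub>m M) *\<^sub>v v) \<le> \<bar>c\<bar> * spec_norm M" .
qed

lemma frob_col: "(frob_norm M)^2 = (\<Sum>b<dim_col M. (vnorm (col M b))^2)"
proof -
  have "(frob_norm M)^2 = (\<Sum>b<dim_col M. \<Sum>a<dim_row M. (M $$ (a,b))^2)"
    unfolding frob_sq by (rule sum.swap)
  thus ?thesis by (simp add: vnorm_sq)
qed

lemma frob_mult:
  assumes A: "A \<in> carrier_mat n1 n2" and B: "B \<in> carrier_mat n2 n3"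
  shows "frob_norm (A * B) \<le> spec_norm A * frob_norm B"
proof -
  have "(frob_norm (A * B))^2 = (\<Sum>b<n3. (vnorm (A *\<^sub>v col B b))^2)"
    using A B by (simp add: frob_col mult_mat_vec_def)
  also have "\<dots> \<le> (\<Sum>b<n3. (spec_norm A)^2 * (vnorm (col B b))^2)"
  proof (rule sum_mono)
    fix b assume "b \<in> {..<n3}"
    have "vnorm (A *\<^sub>v col B b) \<le> spec_norm A * vnorm (col B b)"
      by (rule vnorm_mult_spec) (use A B in auto)
    hence "(vnorm (A *\<^sub>v col B b))^2 \<le> (spec_norm A * vnorm (col B b))^2"
      by (rule power_mono[OF _ vnorm_nonneg])
    thus "(vnorm (A *\<^sub>v col B b))^2 \<le> (spec_norm A)^2 * (vnorm (col B b))^2"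
      by (simp add: power_mult_distrib)
  qed
  also have "\<dots> = (spec_norm A * frob_norm B)^2"
    using B by (simp add: frob_col power_mult_distrib sum_distrib_left)
  finally show ?thesis
    by (meson frob_nonneg spec_nonneg mult_nonneg_nonneg power2_le_imp_le)
qed

lemma frob_smult: "frob_norm (c \<cdot>\<^sub>m M) = \<bar>c\<bar> * frob_norm M"
proof -
  have "(frob_norm (c \<cdot>\<^sub>m M))^2 = (\<bar>c\<bar> * frob_norm M)^2"
    by (simp add: frob_sq power_mult_distrib sum_distrib_left)
  thus ?thesis using frob_nonneg
    by (metis abs_ge_zero mult_nonneg_nonneg power2_eq_iff_nonneg)
qed

lemma frob_L2: "frob_norm M = L2_set (\<lambda>(a,b). M $$ (a,b)) ({..<dim_row M} \<times> {..<dim_col M})"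
  unfolding frob_norm_def L2_set_def
  by (simp only: sum.cartesian_product) (simp add: case_prod_unfold)

lemma frob_diff:
  assumes M: "M \<in> carrier_mat r c" and N: "N \<in> carrier_mat r c"
  shows "frob_norm (M - N) \<le> frob_norm M + frob_norm N"
proof -
  have "frob_norm (M - N) = L2_set (\<lambda>p. (\<lambda>(a,b). M $$ (a,b)) p + (\<lambda>(a,b). - N $$ (a,b)) p) ({..<r} \<times> {..<c})"
    using M N unfolding frob_L2 by (intro L2_set_cong) auto
  also have "\<dots> \<le> L2_set (\<lambda>(a,b). M $$ (a,b)) ({..<r} \<times> {..<c}) + L2_set (\<lambda>(a,b). - N $$ (a,b)) ({..<r} \<times> {..<c})"
    by (rule L2_set_triangle_ineq)
  also have "L2_set (\<lambda>(a,b). - N $$ (a,b)) ({..<r} \<times> {..<c}) = frob_norm N"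
    using N unfolding frob_L2 L2_set_def by (simp add: case_prod_beta)
  finally show ?thesis using M unfolding frob_L2 by simp
qed

lemma frob_diff_lower:
  assumes M: "M \<in> carrier_mat r c" and N: "N \<in> carrier_mat r c"
  shows "frob_norm N - frob_norm M \<le> frob_norm (M - N)"
proof -
  have "N = M - (M - N)" using M N by (intro eq_matI) auto
  hence "frob_norm N \<le> frob_norm M + frob_norm (M - N)"
    using frob_diff[of M r c "M - N"] M N minus_carrier_mat[OF N, of M] by auto
  thus ?thesis by simp
qed



lemma seg_carrier:
  assumes i: "1 \<le> i" and A: "\<And>j. i \<le> j \<Longrightarrow> j < i + k \<Longrightarrow> A j \<in> carrier_mat (d j) (d (j - 1))"
  shows "seg_prod A (d (i - 1)) i k \<in> carrier_mat (d (i + k - 1)) (d (i - 1))"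
  using A
proof (induction k)
  case 0 thus ?case using i by simp
next
  case (Suc k)
  have S: "seg_prod A (d (i - 1)) i k \<in> carrier_mat (d (i + k - 1)) (d (i - 1))"
    using Suc by simp
  have Ak: "A (i + k) \<in> carrier_mat (d (i + k)) (d (i + k - 1))" using Suc.prems by simp
  show ?case using mult_carrier_mat[OF Ak S] by simp
qed

lemma seg_cong:
  assumes "\<And>j. i \<le> j \<Longrightarrow> j < i + k \<Longrightarrow> A j = B j"
  shows "seg_prod A n i k = seg_prod B n i k"
  using assms by (induction k) auto

lemma seg_split:
  assumes i: "1 \<le> i" and A: "\<And>j. i \<le> j \<Longrightarrow> j < i + k + m \<Longrightarrow> A j \<in> carrier_mat (d j) (d (j - 1))"
  shows "seg_prod A (d (i - 1)) i (k + m) = seg_prod A (d (i + k - 1)) (i + k) m * seg_prod A (d (i - 1)) i k"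
  using A
proof (induction m)
  case 0
  have S: "seg_prod A (d (i - 1)) i k \<in> carrier_mat (d (i + k - 1)) (d (i - 1))"
    by (rule seg_carrier[OF i]) (use 0 in auto)
  show ?case using left_mult_one_mat[OF S] by simp
next
  case (Suc m)
  have S: "seg_prod A (d (i - 1)) i k \<in> carrier_mat (d (i + k - 1)) (d (i - 1))"
    by (rule seg_carrier[OF i]) (use Suc.prems in auto)
  have T0: "seg_prod A (d (i + k - 1)) (i + k) m \<in> carrier_mat (d (i + k + m - 1)) (d (i + k - 1))"
    using seg_carrier[where i="i + k" and A=A and k=m and d=d] i Suc.prems by simp
  have Ak: "A (i + k + m) \<in> carrier_mat (d (i + k + m)) (d (i + k + m - 1))" using Suc.prems by simp
  have "seg_prod A (d (i - 1)) i (k + Suc m) = A (i + (k + m)) * seg_prod A (d (i - 1)) i (k + m)"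
    by simp
  also have "\<dots> = A (i + k + m) * (seg_prod A (d (i + k - 1)) (i + k) m * seg_prod A (d (i - 1)) i k)"
    using Suc by (simp add: add.assoc)
  also have "\<dots> = A (i + k + m) * seg_prod A (d (i + k - 1)) (i + k) m * seg_prod A (d (i - 1)) i k"
    by (rule assoc_mult_mat[OF Ak T0 S, symmetric])
  also have "\<dots> = seg_prod A (d (i + k - 1)) (i + k) (Suc m) * seg_prod A (d (i - 1)) i k"
    by simp
  finally show ?case .
qed

lemma smult_smult_mat: "a \<cdot>\<^sub>m (b \<cdot>\<^sub>m (M :: real mat)) = (a * b) \<cdot>\<^sub>m M"
  by (intro eq_matI) auto

lemma seg_scale:
  assumes i: "1 \<le> i" and A: "\<And>j. i \<le> j \<Longrightarrow> j < i + k \<Longrightarrow> A j \<in> carrier_mat (d j) (d (j - 1))"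
    and W: "\<And>j. i \<le> j \<Longrightarrow> j < i + k \<Longrightarrow> W j = s j \<cdot>\<^sub>m A j"
  shows "seg_prod W (d (i - 1)) i k = (\<Prod>j\<in>{i..<i+k}. s j) \<cdot>\<^sub>m seg_prod A (d (i - 1)) i k"
  using A W
proof (induction k)
  case 0 thus ?case by (intro eq_matI) auto
next
  case (Suc k)
  have S: "seg_prod A (d (i - 1)) i k \<in> carrier_mat (d (i + k - 1)) (d (i - 1))"
    by (rule seg_carrier[OF i]) (use Suc.prems in auto)
  have Ak: "A (i + k) \<in> carrier_mat (d (i + k)) (d (i + k - 1))" using Suc.prems by simp
  define c where "c = (\<Prod>j\<in>{i..<i+k}. s j)"
  have "seg_prod W (d (i - 1)) i (Suc k) = (s (i + k) \<cdot>\<^sub>m A (i + k)) * (c \<cdot>\<^sub>m seg_prod A (d (i - 1)) i k)"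
    using Suc by (simp add: c_def)
  also have "\<dots> = s (i + k) \<cdot>\<^sub>m (A (i + k) * (c \<cdot>\<^sub>m seg_prod A (d (i - 1)) i k))"
    by (rule mult_smult_assoc_mat[OF Ak smult_carrier_mat[OF S]])
  also have "\<dots> = s (i + k) \<cdot>\<^sub>m (c \<cdot>\<^sub>m (A (i + k) * seg_prod A (d (i - 1)) i k))"
    unfolding mult_smult_distrib[OF Ak S] ..
  also have "\<dots> = (\<Prod>j\<in>{i..<i+Suc k}. s j) \<cdot>\<^sub>m seg_prod A (d (i - 1)) i (Suc k)"
    by (simp add: smult_smult_mat c_def mult.commute)
  finally show ?case .
qed




lemma eventually_powr_exp:
  fixes a C b g :: real
  assumes a: "0 \<le> a" and C: "0 < C" and b: "0 < b" and g: "0 < g"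
  shows "\<exists>N. \<forall>x\<ge>N. x powr a * C \<le> exp (b * x powr g)"
proof -
  define U where "U = (2 * a / g + \<bar>ln C\<bar>) / b + 1"
  have U1: "U \<ge> 1" unfolding U_def using a b g by (simp add: field_simps)
  show ?thesis
  proof (intro exI[of _ "max 1 (U powr (2 / g))"] allI impI)
    fix x :: real assume x: "max 1 (U powr (2 / g)) \<le> x"
    hence x1: "x \<ge> 1" by simp
    define u where "u = x powr (g / 2)"
    have "U = (U powr (2 / g)) powr (g / 2)" using U1 g by (simp add: powr_powr)
    also have "\<dots> \<le> u" unfolding u_def
      by (rule powr_mono2) (use x g in auto)
    finally have uU: "U \<le> u" .
    hence u1: "u \<ge> 1" using U1 by simp
    have xu: "x = u powr (2 / g)" unfolding u_def using x1 g by (simp add: powr_powr)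
    have lnx: "ln x = (2 / g) * ln u" unfolding xu using u1 by (simp add: ln_powr)
    have lnu: "ln u \<le> u" using ln_le_minus_one[of u] u1 by simp
    have "ln (x powr a * C) = a * ln x + ln C" using x1 C by (simp add: ln_mult ln_powr)
    also have "\<dots> \<le> (2 * a / g) * u + \<bar>ln C\<bar>"
    proof -
      have "a * ((2 / g) * ln u) \<le> a * ((2 / g) * u)"
        using lnu a g by (intro mult_left_mono) auto
      moreover have "ln C \<le> \<bar>ln C\<bar>" by simp
      ultimately show ?thesis unfolding lnx by (simp add: field_simps)
    qed
    also have "\<dots> \<le> (2 * a / g + \<bar>ln C\<bar>) * u"
      using u1 a g mult_right_mono[OF u1, of "\<bar>ln C\<bar>"] by (simp add: algebra_simps)
    also have "\<dots> \<le> (b * u) * u"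
    proof (rule mult_right_mono)
      have "2 * a / g + \<bar>ln C\<bar> = b * (U - 1)" unfolding U_def using b by simp
      also have "\<dots> \<le> b * u" using uU b by simp
      finally show "2 * a / g + \<bar>ln C\<bar> \<le> b * u" .
    qed (use u1 in simp)
    also have "\<dots> = b * x powr g" unfolding u_def using x1
      by (simp add: powr_add[symmetric])
    finally have "ln (x powr a * C) \<le> b * x powr g" .
    moreover have "x powr a * C > 0" using x1 C by simp
    ultimately show "x powr a * C \<le> exp (b * x powr g)"
      by (metis exp_le_cancel_iff exp_ln)
  qed
qed




lemma P_split:
  assumes i: "1 \<le> i" "i \<le> L"
    and V: "\<And>j. 1 \<le> j \<Longrightarrow> j \<le> L \<Longrightarrow> V j \<in> carrier_mat (d j) (d (j - 1))"
  shows "seg_prod V (d 0) 1 L = seg_prod V (d i) (i + 1) (L - i) * (V i * seg_prod V (d 0) 1 (i - 1))"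
proof -
  have Vi: "V i \<in> carrier_mat (d i) (d (i - 1))" using V i by simp
  have C: "seg_prod V (d 0) 1 (i - 1) \<in> carrier_mat (d (i - 1)) (d 0)"
    using seg_carrier[where i=1 and k="i - 1" and A=V and d=d] V i by simp
  have B: "seg_prod V (d i) (i + 1) (L - i) \<in> carrier_mat (d L) (d i)"
    using seg_carrier[where i="i + 1" and k="L - i" and A=V and d=d] V i by simp
  have s1: "seg_prod V (d (1 - 1)) 1 ((i - 1) + Suc (L - i)) =
      seg_prod V (d (1 + (i - 1) - 1)) (1 + (i - 1)) (Suc (L - i)) * seg_prod V (d (1 - 1)) 1 (i - 1)"
    by (rule seg_split) (use V i in auto)
  have e1: "(i - 1) + Suc (L - i) = L" "1 + (i - 1) = i" "1 + (i - 1) - 1 = i - 1" using i by auto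
  have s2: "seg_prod V (d (i - 1)) i (1 + (L - i)) =
      seg_prod V (d (i + 1 - 1)) (i + 1) (L - i) * seg_prod V (d (i - 1)) i 1"
    by (rule seg_split) (use V i in auto)
  have e2: "seg_prod V (d (i - 1)) i 1 = V i" using Vi by simp
  have "seg_prod V (d 0) 1 L = seg_prod V (d (i - 1)) i (1 + (L - i)) * seg_prod V (d 0) 1 (i - 1)"
    using s1 unfolding e1 by simp
  also have "\<dots> = seg_prod V (d i) (i + 1) (L - i) * V i * seg_prod V (d 0) 1 (i - 1)"
    unfolding s2 e2 by simp
  also have "\<dots> = seg_prod V (d i) (i + 1) (L - i) * (V i * seg_prod V (d 0) 1 (i - 1))"
    by (rule assoc_mult_mat[OF B Vi C])
  finally show ?thesis .
qed


lemma deriv_quad: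
  fixes r g :: "nat \<Rightarrow> nat \<Rightarrow> real"
  shows "((\<lambda>t. (1/2) * (\<Sum>p\<in>P. \<Sum>q\<in>Q. (r p q + t * g p q)^2)) has_real_derivative
          (\<Sum>p\<in>P. \<Sum>q\<in>Q. r p q * g p q)) (at 0)"
  by (auto intro!: derivative_eq_intros simp: sum_distrib_left mult.commute)

lemma EZ:
  fixes Z :: "real mat"
  assumes Z: "Z \<in> carrier_mat m n" and k: "k < r" and q: "q < n" and b: "b < m"
  shows "(mat r m (\<lambda>p. if p = (a,b) then 1 else 0) * Z) $$ (k,q) = (if k = a then Z $$ (b,q) else 0)"
proof -
  have ite: "\<And>P (x::real). (if P then 1 else 0) * x = (if P then x else 0)" by simp
  show ?thesis using assms by (auto simp: scalar_prod_def ite sum.delta' cong: if_cong)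
qed

lemma BEZ:
  fixes Z B :: "real mat"
  assumes Z: "Z \<in> carrier_mat m n" and B: "B \<in> carrier_mat l r" and p: "p < l" and q: "q < n"
    and a: "a < r" and b: "b < m"
  shows "(B * (mat r m (\<lambda>p. if p = (a,b) then 1 else 0) * Z)) $$ (p,q) = B $$ (p,a) * Z $$ (b,q)"
proof -
  define M where "M = mat r m (\<lambda>p. if p = (a,b) then 1 else 0) * Z"
  have M: "M \<in> carrier_mat r n" unfolding M_def using Z by (intro mult_carrier_mat) auto
  have Me: "\<And>k. k < r \<Longrightarrow> M $$ (k,q) = (if k = a then Z $$ (b,q) else 0)"
    unfolding M_def by (rule EZ[OF Z _ q b])
  have "(B * M) $$ (p,q) = (\<Sum>k = 0..<r. B $$ (p,k) * (if k = a then Z $$ (b,q) else 0))"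
    using B M p q by (auto simp: scalar_prod_def Me intro!: sum.cong)
  also have "\<dots> = B $$ (p,a) * Z $$ (b,q)"
    using a by (simp add: if_distrib sum.delta' cong: if_cong)
  finally show ?thesis unfolding M_def .
qed




lemma grad_formula:
  fixes W :: "nat \<Rightarrow> real mat"
  assumes i: "1 \<le> i" "i \<le> L"
    and W: "\<forall>j\<in>{1..L}. W j \<in> carrier_mat (d j) (d (j - 1))"
    and X: "X \<in> carrier_mat (d 0) n" and Y: "Y \<in> carrier_mat (d L) n"
  shows "grad_loss L d \<alpha> X Y W i =
    \<alpha> \<cdot>\<^sub>m (transpose_mat (seg_prod W (d i) (i + 1) (L - i)) * (\<alpha> \<cdot>\<^sub>m (mat_range d W L 1 * X) - Y)
         * transpose_mat (seg_prod W (d 0) 1 (i - 1) * X))"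
proof -
  define B where "B = seg_prod W (d i) (i + 1) (L - i)"
  define C where "C = seg_prod W (d 0) 1 (i - 1)"
  define Z where "Z = C * X"
  define R where "R = \<alpha> \<cdot>\<^sub>m (mat_range d W L 1 * X) - Y"
  have Wc: "\<And>j. 1 \<le> j \<Longrightarrow> j \<le> L \<Longrightarrow> W j \<in> carrier_mat (d j) (d (j - 1))" using W by auto
  have Wi: "W i \<in> carrier_mat (d i) (d (i - 1))" using Wc i by simp
  have Cc: "C \<in> carrier_mat (d (i - 1)) (d 0)"
    unfolding C_def using seg_carrier[where i=1 and k="i - 1" and A=W and d=d] Wc i by simp
  have Bc: "B \<in> carrier_mat (d L) (d i)"
    unfolding B_def using seg_carrier[where i="i + 1" and k="L - i" and A=W and d=d] Wc i by simp
  have Zc: "Z \<in> carrier_mat (d (i - 1)) n" unfolding Z_def using Cc X by simp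
  have mr: "\<And>V. mat_range d V L 1 = seg_prod V (d 0) 1 L" unfolding mat_range_def by simp
  have P: "mat_range d W L 1 = B * (W i * C)"
    unfolding mr B_def C_def by (rule P_split[OF i]) (use Wc in auto)
  have Rc: "R \<in> carrier_mat (d L) n" unfolding R_def by (rule minus_carrier_mat[OF Y])
  have deriv: "((\<lambda>t. loss L d \<alpha> X Y (W(i := mat (d i) (d (i - 1))
                 (\<lambda>p. if p = (a,b) then W i $$ p + t else W i $$ p))))
               has_real_derivative (\<Sum>p<d L. \<Sum>q<n. R $$ (p,q) * (\<alpha> * B $$ (p,a) * Z $$ (b,q)))) (at 0)"
    if ab: "a < d i" "b < d (i - 1)" for a b
  proof -
    define E where "E = mat (d i) (d (i - 1)) (\<lambda>p. if p = (a,b) then 1 else (0::real))"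
    have Ec: "E \<in> carrier_mat (d i) (d (i - 1))" unfolding E_def by simp
    have BEZ': "\<And>p q. p < d L \<Longrightarrow> q < n \<Longrightarrow> (B * (E * Z)) $$ (p,q) = B $$ (p,a) * Z $$ (b,q)"
      unfolding E_def by (rule BEZ[OF Zc Bc _ _ ab])
    have BECX: "B * (E * C) * X = B * (E * Z)"
      unfolding Z_def using assoc_mult_mat[OF Bc mult_carrier_mat[OF Ec Cc] X]
        assoc_mult_mat[OF Ec Cc X] by simp
    have eqf: "loss L d \<alpha> X Y (W(i := mat (d i) (d (i - 1))
                 (\<lambda>p. if p = (a,b) then W i $$ p + t else W i $$ p)))
          = (1/2) * (\<Sum>p\<in>{..<d L}. \<Sum>q\<in>{..<n}. (R $$ (p,q) + t * (\<alpha> * B $$ (p,a) * Z $$ (b,q)))^2)"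
      for t
    proof -
      define V where "V = W(i := W i + t \<cdot>\<^sub>m E)"
      have mateq: "mat (d i) (d (i - 1)) (\<lambda>p. if p = (a,b) then W i $$ p + t else W i $$ p) = W i + t \<cdot>\<^sub>m E"
        using Wi by (intro eq_matI) (auto simp: E_def)
      have Vc: "\<And>j. 1 \<le> j \<Longrightarrow> j \<le> L \<Longrightarrow> V j \<in> carrier_mat (d j) (d (j - 1))"
        using Wc Wi Ec by (auto simp: V_def)
      have VB: "seg_prod V (d i) (i + 1) (L - i) = B"
        unfolding B_def by (rule seg_cong) (auto simp: V_def)
      have VC: "seg_prod V (d 0) 1 (i - 1) = C"
        unfolding C_def by (rule seg_cong) (auto simp: V_def)
      have PV: "mat_range d V L 1 = B * ((W i + t \<cdot>\<^sub>m E) * C)"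
        unfolding mr using P_split[OF i, of V d] Vc unfolding VB VC by (simp add: V_def)
      have tE: "t \<cdot>\<^sub>m E \<in> carrier_mat (d i) (d (i - 1))" using Ec by simp
      have "(W i + t \<cdot>\<^sub>m E) * C = W i * C + t \<cdot>\<^sub>m (E * C)"
        using add_mult_distrib_mat[OF Wi tE Cc] mult_smult_assoc_mat[OF Ec Cc] by simp
      hence "B * ((W i + t \<cdot>\<^sub>m E) * C) = B * (W i * C) + t \<cdot>\<^sub>m (B * (E * C))"
        using mult_add_distrib_mat[OF Bc mult_carrier_mat[OF Wi Cc] smult_carrier_mat[OF mult_carrier_mat[OF Ec Cc]]]
          mult_smult_distrib[OF Bc mult_carrier_mat[OF Ec Cc]] by simp
      hence "B * ((W i + t \<cdot>\<^sub>m E) * C) * X = B * (W i * C) * X + t \<cdot>\<^sub>m (B * (E * C) * X)"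
        using add_mult_distrib_mat[OF mult_carrier_mat[OF Bc mult_carrier_mat[OF Wi Cc]]
            smult_carrier_mat[OF mult_carrier_mat[OF Bc mult_carrier_mat[OF Ec Cc]]] X]
          mult_smult_assoc_mat[OF mult_carrier_mat[OF Bc mult_carrier_mat[OF Ec Cc]] X] by simp
      hence PVX: "mat_range d V L 1 * X = B * (W i * C) * X + t \<cdot>\<^sub>m (B * (E * Z))"
        unfolding PV BECX .
      define M where "M = \<alpha> \<cdot>\<^sub>m (mat_range d V L 1 * X) - Y"
      have Mc: "M \<in> carrier_mat (d L) n" unfolding M_def by (rule minus_carrier_mat[OF Y])
      have Me: "M $$ (p,q) = R $$ (p,q) + t * (\<alpha> * B $$ (p,a) * Z $$ (b,q))"
        if pq: "p < d L" "q < n" for p q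
      proof -
        have "M $$ (p,q) = \<alpha> * ((B * (W i * C) * X) $$ (p,q) + t * (B * (E * Z)) $$ (p,q)) - Y $$ (p,q)"
          unfolding M_def PVX using pq Bc Wi Cc X Y Ec Zc by simp
        moreover have "R $$ (p,q) = \<alpha> * (B * (W i * C) * X) $$ (p,q) - Y $$ (p,q)"
          unfolding R_def P using pq Bc Wi Cc X Y by simp
        ultimately show ?thesis using BEZ'[OF pq] by (simp add: algebra_simps)
      qed
      have "loss L d \<alpha> X Y V = (1/2) * (frob_norm M)^2"
        unfolding loss_def M_def ..
      also have "\<dots> = (1/2) * (\<Sum>p<d L. \<Sum>q<n. (M $$ (p,q))^2)"
        using Mc by (simp add: frob_sq)
      also have "\<dots> = (1/2) * (\<Sum>p\<in>{..<d L}. \<Sum>q\<in>{..<n}. (R $$ (p,q) + t * (\<alpha> * B $$ (p,a) * Z $$ (b,q)))^2)"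
        using Me by simp
      finally show ?thesis unfolding V_def mateq .
    qed
    show ?thesis unfolding eqf by (rule deriv_quad)
  qed
  have "grad_loss L d \<alpha> X Y W i = \<alpha> \<cdot>\<^sub>m (transpose_mat B * R * transpose_mat Z)"
  proof (rule eq_matI)
    fix a b assume ab0: "a < dim_row (\<alpha> \<cdot>\<^sub>m (transpose_mat B * R * transpose_mat Z))"
      "b < dim_col (\<alpha> \<cdot>\<^sub>m (transpose_mat B * R * transpose_mat Z))"
    hence ab: "a < d i" "b < d (i - 1)" using Bc Zc by auto
    have val: "(\<alpha> \<cdot>\<^sub>m (transpose_mat B * R * transpose_mat Z)) $$ (a,b)
        = (\<Sum>p<d L. \<Sum>q<n. R $$ (p,q) * (\<alpha> * B $$ (p,a) * Z $$ (b,q)))"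
    proof -
      have "(\<alpha> \<cdot>\<^sub>m (transpose_mat B * R * transpose_mat Z)) $$ (a,b)
          = \<alpha> * (\<Sum>p<d L. B $$ (p, a) * (\<Sum>q<n. R $$ (p, q) * Z $$ (b, q)))"
        using ab Bc Rc Zc by (simp add: scalar_prod_def atLeast0LessThan)
      also have "\<dots> = (\<Sum>p<d L. \<Sum>q<n. R $$ (p,q) * (\<alpha> * B $$ (p,a) * Z $$ (b,q)))"
        by (simp add: sum_distrib_left ac_simps)
      finally show ?thesis .
    qed
    have "grad_loss L d \<alpha> X Y W i $$ (a,b) = (\<Sum>p<d L. \<Sum>q<n. R $$ (p,q) * (\<alpha> * B $$ (p,a) * Z $$ (b,q)))"
      unfolding grad_loss_def using ab
      by (simp, intro some_equality deriv[OF ab, simplified]) (rule DERIV_unique[OF _ deriv[OF ab, simplified]])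
    thus "grad_loss L d \<alpha> X Y W i $$ (a,b) = (\<alpha> \<cdot>\<^sub>m (transpose_mat B * R * transpose_mat Z)) $$ (a,b)"
      using val by simp
  qed (use Bc Zc in \<open>auto simp: grad_loss_def\<close>)
  thus ?thesis unfolding B_def C_def Z_def R_def .
qed




lemma core:
  fixes \<gamma> c\<^sub>1 K K' :: real and L :: nat and d :: "nat \<Rightarrow> nat" and X Y :: "real mat"
    and \<alpha> :: real and \<sigma> :: "nat \<Rightarrow> real" and W :: "nat \<Rightarrow> real mat"
  assumes g: "0 < \<gamma>" and c: "0 < c\<^sub>1" and K: "1 \<le> K" and K': "1 \<le> K'"
    and L6: "6 \<le> L"
    and E1: "real L powr K * (21 * K' * K^2) \<le> exp (c\<^sub>1 * real L powr \<gamma>)"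
    and E2: "real L powr (K + 3) * (K'^2 * (K + 1) * K) \<le> exp (c\<^sub>1 / 10 * real L powr \<gamma>)"
    and dpos: "\<forall>i\<le>L. 0 < d i"
    and X: "X \<in> carrier_mat (d 0) n" and Y: "Y \<in> carrier_mat (d L) n"
    and X1: "1 / K \<le> frob_norm X" and X2: "frob_norm X \<le> K"
    and Y1: "1 / K \<le> frob_norm Y" and Y2: "frob_norm Y \<le> K"
    and \<alpha>: "0 < \<alpha>" and \<sigma>: "\<forall>i\<in>{1..L}. 0 < \<sigma> i"
    and \<beta>: "\<alpha> * (\<Prod>i=1..L. sqrt (real (d i)) * \<sigma> i) \<le> real L powr K"
    and Wc: "\<forall>i\<in>{1..L}. W i \<in> carrier_mat (d i) (d (i - 1))"
    and H1: "\<forall>i j. 1 \<le> i \<longrightarrow> i \<le> j \<longrightarrow> j \<le> L \<longrightarrow>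
         spec_norm (mat_range d (\<lambda>i. (1 / (sqrt (real (d i)) * \<sigma> i)) \<cdot>\<^sub>m W i) j i) \<le> K' * real L ^ 3"
    and H2: "\<forall>i j. 1 \<le> i \<longrightarrow> i \<le> j \<longrightarrow> j \<le> L \<longrightarrow> real (j - i) \<ge> real L / 4 \<longrightarrow>
         spec_norm (mat_range d (\<lambda>i. (1 / (sqrt (real (d i)) * \<sigma> i)) \<cdot>\<^sub>m W i) j i) \<le> K' * exp (- c\<^sub>1 * real L powr \<gamma>)"
  shows "0.4 * (frob_norm Y)^2 < loss L d \<alpha> X Y W \<and>
    loss L d \<alpha> X Y W < 0.6 * (frob_norm Y)^2 \<and>
    (\<forall>i\<in>{1..L}. spec_norm (grad_loss L d \<alpha> X Y W i)
        \<le> exp (- 0.9 * c\<^sub>1 * real L powr \<gamma>) / (sqrt (real (d i)) * \<sigma> i))"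
proof -
  define s where "s = (\<lambda>i. sqrt (real (d i)) * \<sigma> i)"
  define A where "A = (\<lambda>i. (1 / (sqrt (real (d i)) * \<sigma> i)) \<cdot>\<^sub>m W i)"
  define e where "e = exp (- c\<^sub>1 * real L powr \<gamma>)"
  define \<beta> where "\<beta> = \<alpha> * (\<Prod>i=1..L. s i)"
  have spos: "\<And>j. 1 \<le> j \<Longrightarrow> j \<le> L \<Longrightarrow> 0 < s j"
    using dpos \<sigma> by (auto simp: s_def)
  have \<beta>pos: "0 < \<beta>" unfolding \<beta>_def using \<alpha> spos by (intro mult_pos_pos prod_pos) auto
  have \<beta>le: "\<beta> \<le> real L powr K" using \<beta> unfolding \<beta>_def s_def .
  have epos: "0 < e" unfolding e_def by simp
  have H1': "\<And>i j. 1 \<le> i \<Longrightarrow> i \<le> j \<Longrightarrow> j \<le> L \<Longrightarrow> spec_norm (mat_range d A j i) \<le> K' * real L ^ 3"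
    using H1 unfolding A_def by blast
  have H2': "\<And>i j. 1 \<le> i \<Longrightarrow> i \<le> j \<Longrightarrow> j \<le> L \<Longrightarrow> real (j - i) \<ge> real L / 4 \<Longrightarrow>
      spec_norm (mat_range d A j i) \<le> K' * e"
    using H2 unfolding A_def e_def by blast
  have Wc': "\<And>j. 1 \<le> j \<Longrightarrow> j \<le> L \<Longrightarrow> W j \<in> carrier_mat (d j) (d (j - 1))" using Wc by auto
  have Ac: "\<And>j. 1 \<le> j \<Longrightarrow> j \<le> L \<Longrightarrow> A j \<in> carrier_mat (d j) (d (j - 1))"
    using Wc' unfolding A_def by simp
  have WA: "\<And>j. 1 \<le> j \<Longrightarrow> j \<le> L \<Longrightarrow> W j = s j \<cdot>\<^sub>m A j"
  proof -
    fix j assume j: "1 \<le> j" "j \<le> L"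
    have "s j \<cdot>\<^sub>m A j = (s j * (1 / s j)) \<cdot>\<^sub>m W j" unfolding A_def s_def by (simp add: smult_smult_mat)
    also have "\<dots> = W j" using spos[OF j] by (intro eq_matI) auto
    finally show "W j = s j \<cdot>\<^sub>m A j" by simp
  qed
  have scale: "\<And>i k. 1 \<le> i \<Longrightarrow> i + k \<le> Suc L \<Longrightarrow>
      seg_prod W (d (i - 1)) i k = (\<Prod>j\<in>{i..<i+k}. s j) \<cdot>\<^sub>m seg_prod A (d (i - 1)) i k"
    by (rule seg_scale) (use Ac WA in auto)
  have K0: "0 < K" using K by simp
  define AL where "AL = mat_range d A L 1"
  have ALc: "AL \<in> carrier_mat (d L) (d 0)"
    unfolding AL_def mat_range_def using seg_carrier[where i=1 and k=L and A=A and d=d] Ac by simp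
  have PW: "mat_range d W L 1 = (\<Prod>j\<in>{1..L}. s j) \<cdot>\<^sub>m AL"
  proof -
    have "mat_range d W L 1 = seg_prod W (d (1 - 1)) 1 L" unfolding mat_range_def by simp
    also have "\<dots> = (\<Prod>j\<in>{1..<1+L}. s j) \<cdot>\<^sub>m seg_prod A (d (1 - 1)) 1 L" by (rule scale) auto
    also have "{1..<1+L} = {1..L}" by auto
    finally show ?thesis unfolding AL_def mat_range_def by simp
  qed
  have PX: "\<alpha> \<cdot>\<^sub>m (mat_range d W L 1 * X) = \<beta> \<cdot>\<^sub>m (AL * X)"
    unfolding PW \<beta>_def using mult_smult_assoc_mat[OF ALc X] by (simp add: smult_smult_mat)
  define \<epsilon> where "\<epsilon> = real L powr K * (K' * e) * K"
  have ALs: "spec_norm AL \<le> K' * e" unfolding AL_def by (rule H2') (use L6 in auto)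
  have frobPX: "frob_norm (\<alpha> \<cdot>\<^sub>m (mat_range d W L 1 * X)) \<le> \<epsilon>"
  proof -
    have "frob_norm (\<alpha> \<cdot>\<^sub>m (mat_range d W L 1 * X)) = \<beta> * frob_norm (AL * X)"
      unfolding PX frob_smult using \<beta>pos by simp
    also have "\<dots> \<le> \<beta> * (spec_norm AL * frob_norm X)"
      by (rule mult_left_mono[OF frob_mult[OF ALc X]]) (use \<beta>pos in simp)
    also have "\<dots> \<le> real L powr K * ((K' * e) * K)"
      by (intro mult_mono ALs X2 \<beta>le) (use K' epos in \<open>auto intro: spec_nonneg frob_nonneg mult_nonneg_nonneg\<close>)
    finally show ?thesis unfolding \<epsilon>_def by (simp add: ac_simps)
  qed
  have \<epsilon>small: "\<epsilon> \<le> 1 / (21 * K)"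
  proof -
    have "\<epsilon> * (21 * K) = (real L powr K * (21 * K' * K^2)) * e"
      unfolding \<epsilon>_def by (simp add: power2_eq_square ac_simps)
    also have "\<dots> \<le> exp (c\<^sub>1 * real L powr \<gamma>) * e"
      by (rule mult_right_mono[OF E1]) (use epos in simp)
    also have "\<dots> = 1" unfolding e_def by (simp add: exp_minus[symmetric] exp_add[symmetric])
    finally show ?thesis using K0 by (simp add: field_simps)
  qed
  have \<epsilon>0: "0 \<le> \<epsilon>" unfolding \<epsilon>_def using epos K' K by simp
  define y where "y = frob_norm Y"
  define f where "f = frob_norm (\<alpha> \<cdot>\<^sub>m (mat_range d W L 1 * X) - Y)"
  have Mc: "\<alpha> \<cdot>\<^sub>m (mat_range d W L 1 * X) \<in> carrier_mat (d L) n"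
    unfolding PX using ALc X by simp
  have fup: "f \<le> y + \<epsilon>" unfolding f_def y_def using frob_diff[OF Mc Y] frobPX by simp
  have flo: "y - \<epsilon> \<le> f" unfolding f_def y_def using frob_diff_lower[OF Mc Y] frobPX by simp
  have y1: "1 / K \<le> y" using Y1 y_def by simp
  have ypos: "0 < y" using y1 K0 by (smt (verit) divide_pos_pos)
  have \<epsilon>y: "\<epsilon> \<le> y / 21"
  proof -
    have "K * (21 * \<epsilon>) \<le> 1" using \<epsilon>small K0 by (simp add: field_simps)
    moreover have "1 \<le> K * y" using y1 K0 by (simp add: field_simps)
    ultimately have "K * (21 * \<epsilon>) \<le> K * y" by linarith
    hence "21 * \<epsilon> \<le> y" using K0 by (simp add: mult_le_cancel_left_pos)
    thus ?thesis by simp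
  qed
  have loss_eq: "loss L d \<alpha> X Y W = f^2 / 2" unfolding loss_def f_def by simp
  have f1: "(20/21) * y \<le> f" using flo \<epsilon>y by simp
  have f2: "f \<le> (22/21) * y" using fup \<epsilon>y by simp
  have "((20/21) * y)^2 \<le> f^2" by (rule power_mono[OF f1]) (use ypos in simp)
  moreover have "((20/21) * y)^2 = (400/441) * y^2" by (simp add: power2_eq_square)
  moreover have "0 < y^2" using ypos by simp
  ultimately have lo: "0.4 * y^2 < f^2 / 2" by linarith
  have "f^2 \<le> ((22/21) * y)^2" by (rule power_mono[OF f2]) (use f1 ypos in simp)
  moreover have "((22/21) * y)^2 = (484/441) * y^2" by (simp add: power2_eq_square)
  moreover have "0 < y^2" using ypos by simp
  ultimately have hi: "f^2 / 2 < 0.6 * y^2" by linarith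
  have "1 / (21 * K) \<le> 1" using K by (simp add: field_simps)
  hence fK: "f \<le> K + 1" using fup \<epsilon>small Y2 y_def by linarith
  have grad: "spec_norm (grad_loss L d \<alpha> X Y W i) \<le> exp (- 0.9 * c\<^sub>1 * real L powr \<gamma>) / s i"
    if i: "i \<in> {1..L}" for i
  proof -
    have i1: "1 \<le> i" and iL: "i \<le> L" using i by auto
    define B where "B = seg_prod W (d i) (i + 1) (L - i)"
    define C where "C = seg_prod W (d 0) 1 (i - 1)"
    define R where "R = \<alpha> \<cdot>\<^sub>m (mat_range d W L 1 * X) - Y"
    define AB where "AB = mat_range d A L (i + 1)"
    define AC where "AC = mat_range d A (i - 1) 1"
    define SB where "SB = (\<Prod>j\<in>{i+1..<i+1+(L-i)}. s j)"
    define SC where "SC = (\<Prod>j\<in>{1..<1+(i-1)}. s j)"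
    have Bc: "B \<in> carrier_mat (d L) (d i)"
      unfolding B_def using seg_carrier[where i="i + 1" and k="L - i" and A=W and d=d] Wc' i1 iL by simp
    have Cc: "C \<in> carrier_mat (d (i - 1)) (d 0)"
      unfolding C_def using seg_carrier[where i=1 and k="i - 1" and A=W and d=d] Wc' i1 iL by simp
    have Rc: "R \<in> carrier_mat (d L) n" unfolding R_def by (rule minus_carrier_mat[OF Y])
    have ABc: "AB \<in> carrier_mat (d L) (d i)"
      unfolding AB_def mat_range_def using seg_carrier[where i="i + 1" and k="L - i" and A=A and d=d] Ac i1 iL by simp
    have ACc: "AC \<in> carrier_mat (d (i - 1)) (d 0)"
      unfolding AC_def mat_range_def using seg_carrier[where i=1 and k="i - 1" and A=A and d=d] Ac i1 iL by simp
    have BAB: "B = SB \<cdot>\<^sub>m AB"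
    proof -
      have "B = seg_prod W (d (i + 1 - 1)) (i + 1) (L - i)" unfolding B_def by simp
      also have "\<dots> = SB \<cdot>\<^sub>m seg_prod A (d (i + 1 - 1)) (i + 1) (L - i)"
        unfolding SB_def by (rule scale) (use iL in auto)
      finally show ?thesis unfolding AB_def mat_range_def by simp
    qed
    have CAC: "C = SC \<cdot>\<^sub>m AC"
    proof -
      have "C = seg_prod W (d (1 - 1)) 1 (i - 1)" unfolding C_def by simp
      also have "\<dots> = SC \<cdot>\<^sub>m seg_prod A (d (1 - 1)) 1 (i - 1)"
        unfolding SC_def by (rule scale) (use iL in auto)
      finally show ?thesis unfolding AC_def mat_range_def by simp
    qed
    have SBpos: "0 < SB" unfolding SB_def using spos i1 iL by (intro prod_pos) auto
    have SCpos: "0 < SC" unfolding SC_def using spos i1 iL by (intro prod_pos) auto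
    have prodsplit: "\<alpha> * SB * SC * s i = \<beta>"
    proof -
      have "(\<Prod>j\<in>{1..L}. s j) = (\<Prod>j\<in>{1..<Suc L}. s j)" by (simp add: atLeastLessThanSuc_atLeastAtMost)
      also have "\<dots> = (\<Prod>j\<in>{1..<i}. s j) * (\<Prod>j\<in>{i..<Suc L}. s j)"
        by (rule prod.atLeastLessThan_concat[symmetric]) (use i1 iL in auto)
      also have "(\<Prod>j\<in>{i..<Suc L}. s j) = s i * (\<Prod>j\<in>{Suc i..<Suc L}. s j)"
        by (rule prod.atLeast_Suc_lessThan) (use iL in auto)
      finally have "(\<Prod>j\<in>{1..L}. s j) = SC * (s i * SB)"
        unfolding SB_def SC_def using i1 iL by simp
      thus ?thesis unfolding \<beta>_def by (simp add: ac_simps)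
    qed
    have sB: "spec_norm B \<le> SB * spec_norm AB"
      unfolding BAB using spec_smult[of SB AB] SBpos by simp
    have sC: "spec_norm C \<le> SC * spec_norm AC"
      unfolding CAC using spec_smult[of SC AC] SCpos by simp
    have L3: "1 \<le> K' * real L ^ 3"
    proof -
      have "1 \<le> real L ^ 3" using L6 by (intro one_le_power) simp
      from mult_mono[OF K' this] K' show ?thesis by simp
    qed
    have AB1: "spec_norm AB \<le> K' * real L ^ 3"
    proof (cases "i + 1 \<le> L")
      case True thus ?thesis unfolding AB_def by (intro H1') auto
    next
      case False
      hence "i = L" using iL by simp
      hence "AB = 1\<^sub>m (d L)" unfolding AB_def mat_range_def by simp
      thus ?thesis using spec_one L3 by (metis order_trans)
    qed
    have AC1: "spec_norm AC \<le> K' * real L ^ 3"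
    proof (cases "2 \<le> i")
      case True thus ?thesis unfolding AC_def using iL by (intro H1') auto
    next
      case False
      hence "i = 1" using i1 by simp
      hence "AC = 1\<^sub>m (d 0)" unfolding AC_def mat_range_def by simp
      thus ?thesis using spec_one L3 by (metis order_trans)
    qed
    have Ke0: "0 \<le> K' * e" using K' epos by simp
    have ABAC: "spec_norm AB * spec_norm AC \<le> (K' * real L ^ 3) * (K' * e)"
    proof (cases "i + 1 \<le> L \<and> real (L - (i + 1)) \<ge> real L / 4")
      case True
      hence "spec_norm AB \<le> K' * e" unfolding AB_def by (intro H2') auto
      hence "spec_norm AB * spec_norm AC \<le> (K' * e) * (K' * real L ^ 3)"
        by (rule mult_mono[OF _ AC1 Ke0 spec_nonneg])
      thus ?thesis by (simp add: ac_simps)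
    next
      case False
      have i2: "2 \<le> i" and ge: "real L / 4 \<le> real (i - 1 - 1)"
      proof -
        have "real L / 4 \<le> real i - 2 \<and> 2 \<le> i"
        proof (cases "i + 1 \<le> L")
          case True
          hence "real (L - (i + 1)) = real L - real i - 1" by (simp add: of_nat_diff)
          thus ?thesis using False True L6 by auto
        next
          case False
          hence "i = L" using iL by simp
          thus ?thesis using L6 by auto
        qed
        thus "2 \<le> i" "real L / 4 \<le> real (i - 1 - 1)" by (auto simp: of_nat_diff)
      qed
      hence "spec_norm AC \<le> K' * e" unfolding AC_def using iL by (intro H2') auto
      thus ?thesis by (rule mult_mono[OF AB1 _ _ spec_nonneg]) (use L3 in simp)
    qed
    have G: "grad_loss L d \<alpha> X Y W i = \<alpha> \<cdot>\<^sub>m (transpose_mat B * R * transpose_mat (C * X))"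
      unfolding B_def C_def R_def by (rule grad_formula[OF i1 iL Wc X Y])
    have CX: "C * X \<in> carrier_mat (d (i - 1)) n" using Cc X by simp
    have BR: "transpose_mat B * R \<in> carrier_mat (d i) n" using Bc Rc by simp
    have "spec_norm (grad_loss L d \<alpha> X Y W i) \<le> \<alpha> * spec_norm (transpose_mat B * R * transpose_mat (C * X))"
      unfolding G using spec_smult \<alpha> by (metis abs_of_pos)
    also have "\<dots> \<le> \<alpha> * (spec_norm (transpose_mat B * R) * spec_norm (transpose_mat (C * X)))"
      by (rule mult_left_mono[OF spec_mult[OF BR]]) (use CX \<alpha> in auto)
    also have "\<dots> \<le> \<alpha> * ((spec_norm B * frob_norm R) * (spec_norm C * frob_norm X))"
    proof (rule mult_left_mono[OF mult_mono])
      have "spec_norm (transpose_mat B * R) \<le> spec_norm (transpose_mat B) * spec_norm R"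
        by (rule spec_mult) (use Bc Rc in auto)
      also have "\<dots> \<le> spec_norm B * frob_norm R"
        by (rule mult_mono[OF spec_transpose[OF Bc] spec_le_frob spec_nonneg spec_nonneg])
      finally show "spec_norm (transpose_mat B * R) \<le> spec_norm B * frob_norm R" .
      have "spec_norm (transpose_mat (C * X)) \<le> spec_norm (C * X)" by (rule spec_transpose[OF CX])
      also have "\<dots> \<le> spec_norm C * spec_norm X" by (rule spec_mult[OF Cc X])
      also have "\<dots> \<le> spec_norm C * frob_norm X"
        by (rule mult_left_mono[OF spec_le_frob spec_nonneg])
      finally show "spec_norm (transpose_mat (C * X)) \<le> spec_norm C * frob_norm X" .
    qed (use \<alpha> spec_nonneg frob_nonneg in auto)
    also have "\<dots> \<le> \<alpha> * (((SB * spec_norm AB) * (K + 1)) * ((SC * spec_norm AC) * K))"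
      by (intro mult_left_mono mult_mono sB sC X2)
         (use \<alpha> spec_nonneg frob_nonneg SBpos SCpos fK K in \<open>auto simp: R_def f_def intro!: mult_nonneg_nonneg\<close>)
    also have "\<dots> = (\<alpha> * SB * SC) * (spec_norm AB * spec_norm AC) * ((K + 1) * K)"
      by (simp add: ac_simps)
    also have "\<dots> \<le> (\<alpha> * SB * SC) * ((K' * real L ^ 3) * (K' * e)) * ((K + 1) * K)"
      by (intro mult_right_mono mult_left_mono ABAC) (use \<alpha> SBpos SCpos K in auto)
    also have "\<alpha> * SB * SC = \<beta> / s i" using prodsplit spos[OF i1 iL] by (simp add: field_simps)
    also have "\<beta> / s i * ((K' * real L ^ 3) * (K' * e)) * ((K + 1) * K)
        = (\<beta> * real L ^ 3 * (K'^2 * (K + 1) * K) * e) / s i"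
      by (simp add: power2_eq_square ac_simps)
    also have "\<dots> \<le> (real L powr (K + 3) * (K'^2 * (K + 1) * K) * e) / s i"
    proof (rule divide_right_mono)
      have "real L powr (K + 3) = real L powr K * real L ^ 3"
        using L6 by (simp add: powr_add powr_realpow)
      hence "\<beta> * real L ^ 3 \<le> real L powr (K + 3)" using mult_right_mono[OF \<beta>le, of "real L ^ 3"] by simp
      thus "\<beta> * real L ^ 3 * (K'^2 * (K + 1) * K) * e \<le> real L powr (K + 3) * (K'^2 * (K + 1) * K) * e"
        using K epos by (intro mult_right_mono) auto
    qed (use spos[OF i1 iL] in simp)
    also have "\<dots> \<le> (exp (c\<^sub>1 / 10 * real L powr \<gamma>) * e) / s i"
      by (intro divide_right_mono mult_right_mono E2) (use epos spos[OF i1 iL] in auto)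
    also have "exp (c\<^sub>1 / 10 * real L powr \<gamma>) * e = exp (- 0.9 * c\<^sub>1 * real L powr \<gamma>)"
      unfolding e_def by (simp add: exp_add[symmetric])
    finally show ?thesis .
  qed
  show ?thesis using lo hi grad loss_eq unfolding y_def s_def by auto
qed

theorem lemma5p4:
  fixes \<gamma> c\<^sub>1 K K' :: real
  assumes "0 < \<gamma>" "\<gamma> \<le> 1" "0 < c\<^sub>1" "1 \<le> K" "1 \<le> K'"
  shows "\<exists>L\<^sub>0::nat. \<forall>L\<ge>L\<^sub>0. \<forall>(d::nat \<Rightarrow> nat) (n::nat) (X::real mat) (Y::real mat) (\<alpha>::real)
      (\<sigma>::nat \<Rightarrow> real) (W::nat \<Rightarrow> real mat).
    (\<forall>i\<le>L. 0 < d i) \<longrightarrow>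
    X \<in> carrier_mat (d 0) n \<longrightarrow> Y \<in> carrier_mat (d L) n \<longrightarrow>
    1 / K \<le> frob_norm X \<longrightarrow> frob_norm X \<le> K \<longrightarrow>
    1 / K \<le> frob_norm Y \<longrightarrow> frob_norm Y \<le> K \<longrightarrow>
    0 < \<alpha> \<longrightarrow> (\<forall>i\<in>{1..L}. 0 < \<sigma> i) \<longrightarrow>
    \<alpha> * (\<Prod>i=1..L. sqrt (real (d i)) * \<sigma> i) \<le> real L powr K \<longrightarrow>
    (\<forall>i\<in>{1..L}. W i \<in> carrier_mat (d i) (d (i - 1))) \<longrightarrow>
    (let A = (\<lambda>i. (1 / (sqrt (real (d i)) * \<sigma> i)) \<cdot>\<^sub>m W i) in
      (\<forall>i j. 1 \<le> i \<longrightarrow> i \<le> j \<longrightarrow> j \<le> L \<longrightarrow>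
         spec_norm (mat_range d A j i) \<le> K' * real L ^ 3) \<and>
      (\<forall>i j. 1 \<le> i \<longrightarrow> i \<le> j \<longrightarrow> j \<le> L \<longrightarrow> real (j - i) \<ge> real L / 4 \<longrightarrow>
         spec_norm (mat_range d A j i) \<le> K' * exp (- c\<^sub>1 * real L powr \<gamma>))) \<longrightarrow>
    0.4 * (frob_norm Y)^2 < loss L d \<alpha> X Y W \<and>
    loss L d \<alpha> X Y W < 0.6 * (frob_norm Y)^2 \<and>
    (\<forall>i\<in>{1..L}. spec_norm (grad_loss L d \<alpha> X Y W i)
        \<le> exp (- 0.9 * c\<^sub>1 * real L powr \<gamma>) / (sqrt (real (d i)) * \<sigma> i))"
proof -
  obtain N1 where N1: "\<forall>x\<ge>N1. x powr K * (21 * K' * K^2) \<le> exp (c\<^sub>1 * x powr \<gamma>)"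
    using eventually_powr_exp[of K "21 * K' * K^2" c\<^sub>1 \<gamma>] assms by auto
  obtain N2 where N2: "\<forall>x\<ge>N2. x powr (K + 3) * (K'^2 * (K + 1) * K) \<le> exp (c\<^sub>1 / 10 * x powr \<gamma>)"
    using eventually_powr_exp[of "K + 3" "K'^2 * (K + 1) * K" "c\<^sub>1 / 10" \<gamma>] assms by auto
  show ?thesis
  proof (rule exI[of _ "max 6 (nat \<lceil>max N1 N2\<rceil>)"], rule allI, rule impI)
    fix L :: nat assume L: "max 6 (nat \<lceil>max N1 N2\<rceil>) \<le> L"
    hence L6: "6 \<le> L" by simp
    have "max N1 N2 \<le> real L" using L
      by (metis (no_types, opaque_lifting) le_nat_iff max.bounded_iff of_nat_le_iff real_nat_ceiling_ge order_trans ceiling_le_iff le_of_int_ceiling)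
    hence LN: "N1 \<le> real L" "N2 \<le> real L" by auto
    have E1: "real L powr K * (21 * K' * K^2) \<le> exp (c\<^sub>1 * real L powr \<gamma>)" using N1 LN by auto
    have E2: "real L powr (K + 3) * (K'^2 * (K + 1) * K) \<le> exp (c\<^sub>1 / 10 * real L powr \<gamma>)" using N2 LN by auto
    show "\<forall>(d::nat \<Rightarrow> nat) (n::nat) (X::real mat) (Y::real mat) (\<alpha>::real)
      (\<sigma>::nat \<Rightarrow> real) (W::nat \<Rightarrow> real mat).
    (\<forall>i\<le>L. 0 < d i) \<longrightarrow>
    X \<in> carrier_mat (d 0) n \<longrightarrow> Y \<in> carrier_mat (d L) n \<longrightarrow>
    1 / K \<le> frob_norm X \<longrightarrow> frob_norm X \<le> K \<longrightarrow>
    1 / K \<le> frob_norm Y \<longrightarrow> frob_norm Y \<le> K \<longrightarrow>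
    0 < \<alpha> \<longrightarrow> (\<forall>i\<in>{1..L}. 0 < \<sigma> i) \<longrightarrow>
    \<alpha> * (\<Prod>i=1..L. sqrt (real (d i)) * \<sigma> i) \<le> real L powr K \<longrightarrow>
    (\<forall>i\<in>{1..L}. W i \<in> carrier_mat (d i) (d (i - 1))) \<longrightarrow>
    (let A = (\<lambda>i. (1 / (sqrt (real (d i)) * \<sigma> i)) \<cdot>\<^sub>m W i) in
      (\<forall>i j. 1 \<le> i \<longrightarrow> i \<le> j \<longrightarrow> j \<le> L \<longrightarrow>
         spec_norm (mat_range d A j i) \<le> K' * real L ^ 3) \<and>
      (\<forall>i j. 1 \<le> i \<longrightarrow> i \<le> j \<longrightarrow> j \<le> L \<longrightarrow> real (j - i) \<ge> real L / 4 \<longrightarrow>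
         spec_norm (mat_range d A j i) \<le> K' * exp (- c\<^sub>1 * real L powr \<gamma>))) \<longrightarrow>
    0.4 * (frob_norm Y)^2 < loss L d \<alpha> X Y W \<and>
    loss L d \<alpha> X Y W < 0.6 * (frob_norm Y)^2 \<and>
    (\<forall>i\<in>{1..L}. spec_norm (grad_loss L d \<alpha> X Y W i)
        \<le> exp (- 0.9 * c\<^sub>1 * real L powr \<gamma>) / (sqrt (real (d i)) * \<sigma> i))"
      apply (intro allI impI)
      apply (unfold Let_def)
      apply (elim conjE)
      apply (rule core[OF assms(1) assms(3) assms(4) assms(5) L6 E1 E2])
                  apply assumption+
      done
  qed
qed


end
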